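(* For $\mathbf{x}=(x_1,\dots,x_N)^{\mathrm T}\in\mathbb{R}^N$ define $$\ell_{\mathrm{ter}}(\mathbf{x})=\Big(\sum_{n=1}^N x_n^2\Big)\Big(\sum_{n=1}^N x_n^6\Big)-\Big(\sum_{n=1}^N x_n^4\Big)^2.$$ Then $\ell_{\mathrm{ter}}(\mathbf{x})\ge0$ for all $\mathbf{x}$, and $\ell_{\mathrm{ter}}(\mathbf{x})=0$ if and only if $\mathbf{x}\in\{-\alpha,0,+\alpha\}^N$ for some $\alpha\in\mathbb{R}$. Furthermore, $\ell_{\mathrm{ter}}$ has no spurious stationary points: $\nabla\ell_{\mathrm{ter}}(\mathbf{x})=\mathbf{0}$ holds only if $\mathbf{x}\in\{-\alpha,0,+\alpha\}^N$ for some $\alpha\in\mathbb{R}$.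
   Context: A spurious stationary point of a differentiable function $\ell$ whose zero set is $\mathcal{X}$ is a point $\mathbf{x}\notin\mathcal{X}$ with $\nabla\ell(\mathbf{x})=\mathbf{0}$. *)

theory Defs
  imports "HOL-Analysis.Analysis"
begin

definition ell_ter :: "real ^ 'n \<Rightarrow> real" where
  "ell_ter x = (\<Sum>n\<in>UNIV. (x $ n) ^ 2) * (\<Sum>n\<in>UNIV. (x $ n) ^ 6)
               - (\<Sum>n\<in>UNIV. (x $ n) ^ 4) ^ 2"

end

theory Submission
  imports Defs
begin

lemma ell_lagrange:
  fixes x :: "real ^ 'n"
  shows "2 * ell_ter x = (\<Sum>i\<in>UNIV. \<Sum>j\<in>UNIV. (x$i)^2 * (x$j)^2 * ((x$i)^2 - (x$j)^2)^2)"
proof -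
  have e: "\<And>i j. (x$i)^2 * (x$j)^2 * ((x$i)^2 - (x$j)^2)^2
      = (x$j)^2 * (x$i)^6 + (x$i)^2 * (x$j)^6 - 2 * ((x$i)^4 * (x$j)^4)"
    by (simp add: power2_eq_square power_def algebra_simps)
  have p1: "(\<Sum>i\<in>UNIV. \<Sum>j\<in>UNIV. (x$j)^2 * (x$i)^6) = (\<Sum>n\<in>UNIV. (x $ n) ^ 2) * (\<Sum>n\<in>UNIV. (x $ n) ^ 6)"
    by (subst sum.swap) (simp add: sum_product)
  have p2: "(\<Sum>i\<in>UNIV. \<Sum>j\<in>UNIV. (x$i)^2 * (x$j)^6) = (\<Sum>n\<in>UNIV. (x $ n) ^ 2) * (\<Sum>n\<in>UNIV. (x $ n) ^ 6)"
    by (subst sum_product) simp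
  have p3: "(\<Sum>i\<in>UNIV. \<Sum>j\<in>UNIV. (x$i)^4 * (x$j)^4) = (\<Sum>n\<in>UNIV. (x $ n) ^ 4) ^ 2"
    by (simp add: power2_eq_square sum_product)
  have p4: "(\<Sum>i\<in>UNIV. \<Sum>j\<in>UNIV. 2 * ((x$i)^4 * (x$j)^4)) = 2 * (\<Sum>i\<in>UNIV. \<Sum>j\<in>UNIV. (x$i)^4 * (x$j)^4)"
    by (simp add: sum_distrib_left)
  show ?thesis
    unfolding e ell_ter_def
    by (simp only: sum.distrib sum_subtractf p4 p1 p2 p3) simp
qed

lemma ell_homog:
  fixes x :: "real ^ 'n"
  shows "ell_ter (t *\<^sub>R x) = t^8 * ell_ter x"
  unfolding ell_ter_def
  by (simp add: power_mult_distrib sum_distrib_left[symmetric] algebra_simps power2_eq_square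
      numeral_eq_Suc)

lemma ell_zero_iff:
  fixes x :: "real ^ 'n"
  shows "ell_ter x = 0 \<longleftrightarrow> (\<exists>\<alpha>::real. \<forall>n. x $ n \<in> {-\<alpha>, 0, \<alpha>})"
proof
  assume h: "ell_ter x = 0"
  have "(\<Sum>i\<in>UNIV. \<Sum>j\<in>UNIV. (x$i)^2 * (x$j)^2 * ((x$i)^2 - (x$j)^2)^2) = 0"
    using ell_lagrange[of x] h by simp
  then have z: "\<forall>i. (\<Sum>j\<in>UNIV. (x$i)^2 * (x$j)^2 * ((x$i)^2 - (x$j)^2)^2) = 0"
    by (subst (asm) sum_nonneg_eq_0_iff) (auto intro!: sum_nonneg)
  have zz: "\<And>i j. (x$i)^2 * (x$j)^2 * ((x$i)^2 - (x$j)^2)^2 = 0"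
  proof -
    fix i j
    show "(x$i)^2 * (x$j)^2 * ((x$i)^2 - (x$j)^2)^2 = 0"
      using z[rule_format, of i] by (subst (asm) sum_nonneg_eq_0_iff) auto
  qed
  show "\<exists>\<alpha>::real. \<forall>n. x $ n \<in> {-\<alpha>, 0, \<alpha>}"
  proof (cases "\<exists>k. x$k \<noteq> 0")
    case False then show ?thesis by auto
  next
    case True
    then obtain k where k: "x$k \<noteq> 0" by auto
    show ?thesis
    proof (intro exI allI)
      fix n
      have "x$n = 0 \<or> (x$n)^2 = (x$k)^2" using zz[of n k] k by auto
      then have "x$n = 0 \<or> \<bar>x$n\<bar> = \<bar>x$k\<bar>"
        by (metis power2_eq_iff abs_of_nonneg abs_minus_cancel abs_ge_zero)
      then show "x $ n \<in> {-\<bar>x$k\<bar>, 0, \<bar>x$k\<bar>}" by (auto simp: abs_if split: if_splits)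
    qed
  qed
next
  assume "\<exists>\<alpha>::real. \<forall>n. x $ n \<in> {-\<alpha>, 0, \<alpha>}"
  then obtain \<alpha> where a: "\<And>n. x $ n \<in> {-\<alpha>, 0, \<alpha>}" by blast
  have "\<And>i j. (x$i)^2 * (x$j)^2 * ((x$i)^2 - (x$j)^2)^2 = 0"
  proof -
    fix i j
    show "(x$i)^2 * (x$j)^2 * ((x$i)^2 - (x$j)^2)^2 = 0"
      using a[of i] a[of j] by auto
  qed
  then have "(\<Sum>i\<in>UNIV. \<Sum>j\<in>UNIV. (x$i)^2 * (x$j)^2 * ((x$i)^2 - (x$j)^2)^2) = 0"
    by (simp only:) simp
  then show "ell_ter x = 0" using ell_lagrange[of x] by simp
qed

lemma ell_nonneg:
  fixes x :: "real ^ 'n"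
  shows "ell_ter x \<ge> 0"
proof -
  have "0 \<le> (\<Sum>i\<in>UNIV. \<Sum>j\<in>UNIV. (x$i)^2 * (x$j)^2 * ((x$i)^2 - (x$j)^2)^2)"
    by (intro sum_nonneg) auto
  then show ?thesis using ell_lagrange[of x] by simp
qed

lemma ell_stat:
  fixes x :: "real ^ 'n"
  assumes "GDERIV ell_ter x :> 0"
  shows "ell_ter x = 0"
proof -
  have d: "(ell_ter has_derivative (\<lambda>h. 0)) (at x)"
    using assms unfolding gderiv_def by simp
  have l: "((\<lambda>t::real. t *\<^sub>R x) has_derivative (\<lambda>t. t *\<^sub>R x)) (at 1)"
    by (auto intro!: derivative_eq_intros)
  have "((\<lambda>t::real. ell_ter (t *\<^sub>R x)) has_derivative (\<lambda>h. 0)) (at 1)"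
    using has_derivative_compose[OF l, of ell_ter "\<lambda>h. 0"] d by simp
  then have A: "((\<lambda>t::real. t^8 * ell_ter x) has_derivative (\<lambda>h. 0)) (at 1)"
    by (simp add: ell_homog)
  have B: "((\<lambda>t::real. t^8 * ell_ter x) has_derivative (\<lambda>h. h * (8 * ell_ter x))) (at 1)"
    by (auto intro!: derivative_eq_intros)
  have "(\<lambda>h::real. h * (8 * ell_ter x)) = (\<lambda>h. 0)"
    using has_derivative_unique[OF B A] .
  then have "1 * (8 * ell_ter x) = 0" by metis
  then show ?thesis by simp
qed

theorem mainTheorem5:
  fixes x :: "real ^ 'n"
  shows "ell_ter x \<ge> 0
    \<and> (ell_ter x = 0 \<longleftrightarrow> (\<exists>\<alpha>::real. \<forall>n. x $ n \<in> {-\<alpha>, 0, \<alpha>}))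
    \<and> ((GDERIV ell_ter x :> 0) \<longrightarrow> (\<exists>\<alpha>::real. \<forall>n. x $ n \<in> {-\<alpha>, 0, \<alpha>}))"
  using ell_nonneg[of x] ell_zero_iff[of x] ell_stat[of x] by blast

end
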